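(* Suppose $h\in C^2(\overline R)$ with finite $C^2$ norm solves the height equation with $\inf_Rh_p>0$, and that $h(q,p)\to H_\pm(p)$ pointwise as $q\to\pm\infty$ for some functions $H_\pm$. If $\mathscr S(H_+)=\mathscr S(H_-)=\mathscr S(H)$ and either $H_+\ge H$ on $[-1,0]$ or $H_+\le H$ on $[-1,0]$, then $H_+\equiv H$. The same holds with $H_+$ replaced by $H_-$.
   Context: Fix $\alpha\in(0,1)$, $\rho\in C^{2+\alpha}([-1,0])$ with $\rho>0$, $\rho_p\le0$, $H\in C^{3+\alpha}([-1,0])$ with $H(-1)=0$, $H(0)=1$, $H_p>0$, and $F>0$. Let $R=\mathbb R\times(-1,0)$ (coordinates $(q,p)$), $T=\mathbb R\times\{0\}$, $B=\mathbb R\times\{-1\}$. The height equation for $h$ is $\big(-\frac{1+h_q^2}{2h_p^2}+\frac1{2H_p^2}\big)_p+\big(\frac{h_q}{h_p}\big)_q-\frac1{F^2}\rho_p(h-H)=0$ in $R$, $\frac{1+h_q^2}{2h_p^2}-\frac1{2H_p^2}+\frac1{F^2}\rho(h-1)=0$ on $T$, $h=0$ on $B$. The flow force of a $q$-independent function $K=K(p)$ with $K_p>0$ is $\mathscr S(K)=\int_{-1}^0\Big[\frac1{2K_p^2}+\frac1{2H_p^2}-\frac1{F^2}\rho(K-H)-\frac1{F^2}\int_0^p\rho H_p\,dp'\Big]K_p\,dp$. *)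

theory Defs
  imports "HOL-Analysis.Analysis"
begin

definition Rbar :: "(real \<times> real) set" where
  "Rbar = {z. -1 \<le> snd z \<and> snd z \<le> 0}"

definition Ropen :: "(real \<times> real) set" where
  "Ropen = {z. -1 < snd z \<and> snd z < 0}"

definition dI :: "(real \<Rightarrow> real) \<Rightarrow> real \<Rightarrow> real" where
  "dI f p = vector_derivative f (at p within {-1..0})"

definition pq :: "(real \<times> real \<Rightarrow> real) \<Rightarrow> real \<times> real \<Rightarrow> real" where
  "pq h z = vector_derivative (\<lambda>t. h (t, snd z)) (at (fst z))"

definition pp :: "(real \<times> real \<Rightarrow> real) \<Rightarrow> real \<times> real \<Rightarrow> real" where
  "pp h z = vector_derivative (\<lambda>t. h (fst z, t)) (at (snd z) within {-1..0})"

definition holder_on_I :: "real \<Rightarrow> (real \<Rightarrow> real) \<Rightarrow> bool" where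
  "holder_on_I \<alpha> f \<longleftrightarrow> (\<exists>C. \<forall>x\<in>{-1..0}. \<forall>y\<in>{-1..0}. \<bar>f x - f y\<bar> \<le> C * \<bar>x - y\<bar> powr \<alpha>)"

definition C_k_alpha :: "nat \<Rightarrow> real \<Rightarrow> (real \<Rightarrow> real) \<Rightarrow> bool" where
  "C_k_alpha k \<alpha> f \<longleftrightarrow> (\<exists>D :: nat \<Rightarrow> real \<Rightarrow> real.
      (\<forall>x\<in>{-1..0}. D 0 x = f x) \<and>
      (\<forall>j<k. \<forall>x\<in>{-1..0}. (D j has_real_derivative D (Suc j) x) (at x within {-1..0})) \<and>
      holder_on_I \<alpha> (D k))"

definition C2_bounded_strip :: "(real \<times> real \<Rightarrow> real) \<Rightarrow> bool" where
  "C2_bounded_strip h \<longleftrightarrow> (\<exists>(Dh :: real \<times> real \<Rightarrow> ((real \<times> real) \<Rightarrow>\<^sub>L real))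
       (D2h :: real \<times> real \<Rightarrow> ((real \<times> real) \<Rightarrow>\<^sub>L ((real \<times> real) \<Rightarrow>\<^sub>L real))).
      (\<forall>z\<in>Rbar. (h has_derivative blinfun_apply (Dh z)) (at z within Rbar) \<and>
                 (Dh has_derivative blinfun_apply (D2h z)) (at z within Rbar)) \<and>
      continuous_on Rbar D2h \<and>
      bounded (h ` Rbar) \<and> bounded (Dh ` Rbar) \<and> bounded (D2h ` Rbar))"

definition height_eq :: "(real \<Rightarrow> real) \<Rightarrow> (real \<Rightarrow> real) \<Rightarrow> real \<Rightarrow> (real \<times> real \<Rightarrow> real) \<Rightarrow> bool" where
  "height_eq \<rho> H F h \<longleftrightarrow>
     (\<forall>q p. (q, p) \<in> Ropen \<longrightarrow>
        deriv (\<lambda>t. - (1 + (pq h (q, t))\<^sup>2) / (2 * (pp h (q, t))\<^sup>2) + 1 / (2 * (dI H t)\<^sup>2)) p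
        + deriv (\<lambda>s. pq h (s, p) / pp h (s, p)) q
        - (1 / F\<^sup>2) * dI \<rho> p * (h (q, p) - H p) = 0) \<and>
     (\<forall>q. (1 + (pq h (q, 0))\<^sup>2) / (2 * (pp h (q, 0))\<^sup>2) - 1 / (2 * (dI H 0)\<^sup>2)
          + (1 / F\<^sup>2) * \<rho> 0 * (h (q, 0) - 1) = 0) \<and>
     (\<forall>q. h (q, -1) = 0)"

text \<open>Flow force of a q-independent K; note int_0^p g = - int_p^0 g for p in [-1,0].\<close>
definition flow_force :: "(real \<Rightarrow> real) \<Rightarrow> (real \<Rightarrow> real) \<Rightarrow> real \<Rightarrow> (real \<Rightarrow> real) \<Rightarrow> real" where
  "flow_force \<rho> H F K = integral {-1..0} (\<lambda>p.
      (1 / (2 * (dI K p)\<^sup>2) + 1 / (2 * (dI H p)\<^sup>2) - (1 / F\<^sup>2) * \<rho> p * (K p - H p)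
       - (1 / F\<^sup>2) * (- integral {p..0} (\<lambda>s. \<rho> s * dI H s))) * dI K p)"

end

theory Submission
  imports Defs
begin

lemma real_deriv_bound:
  fixes f :: "real \<Rightarrow> real"
  assumes "\<And>x. x \<in> {a..b} \<Longrightarrow> (f has_real_derivative f' x) (at x within {a..b})"
    and "\<And>x. x \<in> {a..b} \<Longrightarrow> \<bar>f' x\<bar> \<le> B"
    and "x \<in> {a..b}" "y \<in> {a..b}"
  shows "\<bar>f x - f y\<bar> \<le> B * \<bar>x - y\<bar>"
proof -
  have "norm (f x - f y) \<le> B * norm (x - y)"
  proof (rule differentiable_bound[where f' = "\<lambda>x h. f' x * h"])
    show "convex {a..b}" by simp
    show "(f has_derivative (\<lambda>h. f' x * h)) (at x within {a..b})" if "x \<in> {a..b}" for x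
      using assms(1)[OF that] by (simp add: has_field_derivative_def)
    show "onorm (\<lambda>h. f' x * h) \<le> B" if "x \<in> {a..b}" for x
    proof -
      have "onorm (\<lambda>h. f' x * h) = \<bar>f' x\<bar>"
      proof -
        have i: "onorm (\<lambda>h::real. h) = 1" by (rule onorm_id)
        have "onorm (\<lambda>h. f' x * h) = \<bar>f' x\<bar> * onorm (\<lambda>h::real. h)"
          using onorm_scaleR[of "\<lambda>h::real. h" "f' x"] by simp
        thus ?thesis using i by (simp add: mult.commute)
      qed
      then show ?thesis using assms(2)[OF that] by simp
    qed
  qed (use assms in auto)
  then show ?thesis by simp
qed

lemma taylor1:
  fixes f :: "real \<Rightarrow> real"
  assumes d: "\<And>x. x \<in> {a..b} \<Longrightarrow> (f has_real_derivative f' x) (at x within {a..b})"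
    and L: "\<And>u v. u \<in> {a..b} \<Longrightarrow> v \<in> {a..b} \<Longrightarrow> \<bar>f' u - f' v\<bar> \<le> L * \<bar>u - v\<bar>"
    and st: "s \<in> {a..b}" "t \<in> {a..b}"
  shows "\<bar>f s - f t - f' t * (s - t)\<bar> \<le> L * (s - t)^2"
proof (cases "s = t")
  case True then show ?thesis by simp
next
  case False
  have L0: "0 \<le> L"
  proof -
    have "0 \<le> L * \<bar>s - t\<bar>" using L[OF st] by linarith
    then show ?thesis using False by (simp add: zero_le_mult_iff)
  qed
  let ?I = "{min s t..max s t}"
  have sub: "?I \<subseteq> {a..b}" using st by auto
  have d2: "((\<lambda>u. f u - f' t * u) has_real_derivative (f' x - f' t)) (at x within ?I)" if "x \<in> ?I" for x
  proof -
    have "x \<in> {a..b}" using sub that by blast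
    from DERIV_subset[OF d[OF this] sub] show ?thesis by (auto intro!: derivative_eq_intros)
  qed
  have b2: "\<bar>f' x - f' t\<bar> \<le> L * \<bar>s - t\<bar>" if "x \<in> ?I" for x
  proof -
    have "x \<in> {a..b}" using sub that by blast
    then have "\<bar>f' x - f' t\<bar> \<le> L * \<bar>x - t\<bar>" using L[of x t] st by blast
    also have "\<dots> \<le> L * \<bar>s - t\<bar>"
    proof (rule mult_left_mono)
      show "\<bar>x - t\<bar> \<le> \<bar>s - t\<bar>" using that by auto
      show "0 \<le> L" by (rule L0)
    qed
    finally show ?thesis .
  qed
  have "\<bar>(f s - f' t * s) - (f t - f' t * t)\<bar> \<le> (L * \<bar>s - t\<bar>) * \<bar>s - t\<bar>"
    by (rule real_deriv_bound[OF d2 b2]) auto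
  then show ?thesis by (simp add: power2_eq_square algebra_simps abs_mult_self_eq)
qed

lemma filter_cauchy_tendsto:
  fixes f :: "'a \<Rightarrow> real"
  assumes nb: "F \<noteq> bot"
    and c: "\<And>e. e > 0 \<Longrightarrow> \<exists>P. eventually P F \<and> (\<forall>x y. P x \<and> P y \<longrightarrow> \<bar>f x - f y\<bar> < e)"
  shows "\<exists>l. (f \<longlongrightarrow> l) F"
proof -
  have "cauchy_filter (filtermap f F)"
    unfolding cauchy_filter_metric_filtermap dist_real_def using c by blast
  from cauchy_filter_complete_converges[OF this complete_UNIV]
  obtain l where "filtermap f F \<le> nhds l"
    using nb by (auto simp: filtermap_bot_iff)
  then show ?thesis unfolding filterlim_def by blast
qed

lemma DERIV_rhs: "(f has_real_derivative D) F \<Longrightarrow> D = E \<Longrightarrow> (f has_real_derivative E) F"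
  by simp

lemma int_upper_deriv:
  fixes g :: "real \<Rightarrow> real"
  assumes g: "continuous_on {-1..0} g" and t: "t \<in> {-1..0}"
  shows "((\<lambda>t. integral {t..0} g) has_real_derivative (- g t)) (at t within {-1..0})"
proof -
  have int: "g integrable_on {-1..0}" by (rule integrable_continuous_real[OF g])
  have eq: "integral {u..0} g = integral {-1..0} g - integral {-1..u} g" if "u \<in> {-1..0}" for u
  proof -
    have "integral {-1..u} g + integral {u..0} g = integral {-1..0} g"
      by (rule Henstock_Kurzweil_Integration.integral_combine) (use that int in auto)
    then show ?thesis by linarith
  qed
  have "((\<lambda>u. integral {-1..u} g) has_vector_derivative g t) (at t within {-1..0})"
    by (rule integral_has_vector_derivative[OF g t])
  then have "((\<lambda>u. integral {-1..0} g - integral {-1..u} g) has_real_derivative (- g t)) (at t within {-1..0})"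
    by (auto intro!: derivative_eq_intros simp: has_real_derivative_iff_has_vector_derivative[symmetric])
  then show ?thesis
  proof (rule has_field_derivative_transform_within[OF _ zero_less_one t])
    fix x :: real assume "x \<in> {-1..0}"
    from eq[OF this] show "integral {-1..0} g - integral {-1..x} g = integral {x..0} g" by (rule sym)
  qed
qed

lemma alg_id:
  fixes a b F G \<rho> r w f :: real
  assumes "a > 0" "b > 0" "F > 0" "f = 1 / (2 * b\<^sup>2) - 1 / (2 * a\<^sup>2)"
  shows "(1 / (2 * a\<^sup>2) + 1 / (2 * b\<^sup>2) - (1 / F\<^sup>2) * \<rho> * w + G) * a - (1 / (2 * b\<^sup>2) + 1 / (2 * b\<^sup>2) + G) * b
    = ((- (1 / F\<^sup>2) * \<rho> * b) * w + G * (a - b) - (r * w\<^sup>2 + 2 * \<rho> * w * (a - b)) / (2 * F\<^sup>2)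
       + (((1 / F\<^sup>2) * r * w) * w + f * (a - b)) / 2) + (a - b)^3 / (4 * a\<^sup>2 * b\<^sup>2)"
  using assms(1-3) unfolding assms(4) by (simp add: field_simps power2_eq_square power3_eq_cube)

lemma line1:
  fixes g :: "real \<times> real \<Rightarrow> 'b::real_normed_vector"
  assumes "(g has_derivative g') (at (s,p) within Rbar)" "p \<in> {-1..0}"
  shows "((\<lambda>s. g (s,p)) has_derivative (\<lambda>x. g' (x,0))) (at s)"
proof -
  have d: "((\<lambda>s. (s,p)) has_derivative (\<lambda>x. (x,0))) (at s)"
    by (auto intro!: derivative_eq_intros)
  have "range (\<lambda>s. (s,p)) \<subseteq> Rbar" using assms(2) by (auto simp: Rbar_def)
  hence "(g has_derivative g') (at (s,p) within range (\<lambda>s. (s,p)))"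
    using assms(1) has_derivative_subset by blast
  from has_derivative_in_compose[OF d this] show ?thesis by simp
qed

lemma line2:
  fixes g :: "real \<times> real \<Rightarrow> 'b::real_normed_vector"
  assumes "(g has_derivative g') (at (q,t) within Rbar)"
  shows "((\<lambda>t. g (q,t)) has_derivative (\<lambda>x. g' (0,x))) (at t within {-1..0})"
proof -
  have d: "((\<lambda>t. (q,t)) has_derivative (\<lambda>x. (0,x))) (at t within {-1..0})"
    by (auto intro!: derivative_eq_intros)
  have "(\<lambda>t. (q,t)) ` {-1..0} \<subseteq> Rbar" by (auto simp: Rbar_def)
  hence "(g has_derivative g') (at (q,t) within (\<lambda>t. (q,t)) ` {-1..0})"
    using assms(1) has_derivative_subset by blast
  from has_derivative_in_compose[OF d this] show ?thesis by simp
qed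

lemma cont_line2: "continuous_on Rbar g \<Longrightarrow> S \<subseteq> {-1..0} \<Longrightarrow> continuous_on S (\<lambda>t. g (q,t))"
  apply (rule continuous_on_compose2[of Rbar g S "\<lambda>t. (q,t)"])
  apply (auto simp: Rbar_def intro!: continuous_on_Pair continuous_on_const continuous_on_id)
  done

lemma cont_line1: "continuous_on Rbar g \<Longrightarrow> p \<in> {-1..0} \<Longrightarrow> continuous_on S (\<lambda>s. g (s,p))"
  apply (rule continuous_on_compose2[of Rbar g S "\<lambda>s. (s,p)"])
  apply (auto simp: Rbar_def intro!: continuous_on_Pair continuous_on_const continuous_on_id)
  done

locale strip =
  fixes h :: "real \<times> real \<Rightarrow> real"
    and Dh :: "real \<times> real \<Rightarrow> ((real \<times> real) \<Rightarrow>\<^sub>L real)"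
    and D2h :: "real \<times> real \<Rightarrow> ((real \<times> real) \<Rightarrow>\<^sub>L ((real \<times> real) \<Rightarrow>\<^sub>L real))"
    and C \<delta> :: real
  assumes dh: "\<And>z. z \<in> Rbar \<Longrightarrow> (h has_derivative blinfun_apply (Dh z)) (at z within Rbar)"
    and d2h: "\<And>z. z \<in> Rbar \<Longrightarrow> (Dh has_derivative blinfun_apply (D2h z)) (at z within Rbar)"
    and cont2: "continuous_on Rbar D2h"
    and bh: "\<And>z. z \<in> Rbar \<Longrightarrow> \<bar>h z\<bar> \<le> C"
    and bDh: "\<And>z. z \<in> Rbar \<Longrightarrow> norm (Dh z) \<le> C"
    and bD2h: "\<And>z. z \<in> Rbar \<Longrightarrow> norm (D2h z) \<le> C"
    and dpos: "\<delta> > 0"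
    and hyge0: "\<And>z. z \<in> Ropen \<Longrightarrow> pp h z \<ge> \<delta>"
begin

definition "hx z = blinfun_apply (Dh z) (1,0)"
definition "hy z = blinfun_apply (Dh z) (0,1)"
definition "hxx z = blinfun_apply (blinfun_apply (D2h z) (1,0)) (1,0)"
definition "hxy z = blinfun_apply (blinfun_apply (D2h z) (1,0)) (0,1)"
definition "hyx z = blinfun_apply (blinfun_apply (D2h z) (0,1)) (1,0)"
definition "hyy z = blinfun_apply (blinfun_apply (D2h z) (0,1)) (0,1)"

lemma Rbar_iff[simp]: "(q,p) \<in> Rbar \<longleftrightarrow> p \<in> {-1..0}"
  by (auto simp: Rbar_def)

lemma Ropen_iff[simp]: "(q,p) \<in> Ropen \<longleftrightarrow> p \<in> {-1<..<0}"
  by (auto simp: Ropen_def)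

lemma lin1: "(\<lambda>x. blinfun_apply L (x, 0::real)) = (\<lambda>x. blinfun_apply L (1,0) * x)"
  for L :: "(real \<times> real) \<Rightarrow>\<^sub>L real"
proof
  fix x :: real
  have "blinfun_apply L (x, 0) = blinfun_apply L (x *\<^sub>R (1,0))" by simp
  also have "\<dots> = x *\<^sub>R blinfun_apply L (1,0)" by (rule blinfun.scaleR_right)
  finally show "blinfun_apply L (x, 0) = blinfun_apply L (1,0) * x" by simp
qed

lemma lin2: "(\<lambda>x. blinfun_apply L (0::real, x)) = (\<lambda>x. blinfun_apply L (0,1) * x)"
  for L :: "(real \<times> real) \<Rightarrow>\<^sub>L real"
proof
  fix x :: real
  have "blinfun_apply L (0, x) = blinfun_apply L (x *\<^sub>R (0,1))" by simp
  also have "\<dots> = x *\<^sub>R blinfun_apply L (0,1)" by (rule blinfun.scaleR_right)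
  finally show "blinfun_apply L (0, x) = blinfun_apply L (0,1) * x" by simp
qed

lemma lin1b: "(\<lambda>x. blinfun_apply (blinfun_apply M (x, 0::real)) v) = (\<lambda>x. blinfun_apply (blinfun_apply M (1,0)) v * x)"
  for M :: "(real \<times> real) \<Rightarrow>\<^sub>L ((real \<times> real) \<Rightarrow>\<^sub>L real)"
proof
  fix x :: real
  have "blinfun_apply M (x, 0) = blinfun_apply M (x *\<^sub>R (1,0))" by simp
  also have "\<dots> = x *\<^sub>R blinfun_apply M (1,0)" by (rule blinfun.scaleR_right)
  finally show "blinfun_apply (blinfun_apply M (x, 0)) v = blinfun_apply (blinfun_apply M (1,0)) v * x" by (simp add: blinfun.scaleR_left)
qed

lemma lin2b: "(\<lambda>x. blinfun_apply (blinfun_apply M (0::real, x)) v) = (\<lambda>x. blinfun_apply (blinfun_apply M (0,1)) v * x)"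
  for M :: "(real \<times> real) \<Rightarrow>\<^sub>L ((real \<times> real) \<Rightarrow>\<^sub>L real)"
proof
  fix x :: real
  have "blinfun_apply M (0, x) = blinfun_apply M (x *\<^sub>R (0,1))" by simp
  also have "\<dots> = x *\<^sub>R blinfun_apply M (0,1)" by (rule blinfun.scaleR_right)
  finally show "blinfun_apply (blinfun_apply M (0, x)) v = blinfun_apply (blinfun_apply M (0,1)) v * x" by (simp add: blinfun.scaleR_left)
qed

lemma ds_h: "p \<in> {-1..0} \<Longrightarrow> ((\<lambda>s. h (s,p)) has_real_derivative hx (s,p)) (at s)"
  using line1[OF dh[of "(s,p)"]] by (simp add: has_field_derivative_def lin1 hx_def)

lemma dt_h: "t \<in> {-1..0} \<Longrightarrow> ((\<lambda>t. h (q,t)) has_real_derivative hy (q,t)) (at t within {-1..0})"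
  using line2[OF dh[of "(q,t)"]] by (simp add: has_field_derivative_def lin2 hy_def)

lemma ds_Dh: "p \<in> {-1..0} \<Longrightarrow> ((\<lambda>s. blinfun_apply (Dh (s,p)) v) has_real_derivative
     blinfun_apply (blinfun_apply (D2h (s,p)) (1,0)) v) (at s)"
proof -
  assume p: "p \<in> {-1..0}"
  have "((\<lambda>s. Dh (s,p)) has_derivative (\<lambda>x. blinfun_apply (D2h (s,p)) (x,0))) (at s)"
    using line1[OF d2h[of "(s,p)"]] p by simp
  from blinfun.FDERIV[OF this has_derivative_const[of v]]
  show ?thesis by (simp add: has_field_derivative_def lin1b)
qed

lemma dt_Dh: "t \<in> {-1..0} \<Longrightarrow> ((\<lambda>t. blinfun_apply (Dh (q,t)) v) has_real_derivative
     blinfun_apply (blinfun_apply (D2h (q,t)) (0,1)) v) (at t within {-1..0})"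
proof -
  assume p: "t \<in> {-1..0}"
  have "((\<lambda>t. Dh (q,t)) has_derivative (\<lambda>x. blinfun_apply (D2h (q,t)) (0,x))) (at t within {-1..0})"
    using line2[OF d2h[of "(q,t)"]] p by simp
  from blinfun.FDERIV[OF this has_derivative_const[of v]]
  show ?thesis by (simp add: has_field_derivative_def lin2b)
qed

lemma ds_hx: "p \<in> {-1..0} \<Longrightarrow> ((\<lambda>s. hx (s,p)) has_real_derivative hxx (s,p)) (at s)"
  unfolding hx_def hxx_def by (rule ds_Dh)
lemma ds_hy: "p \<in> {-1..0} \<Longrightarrow> ((\<lambda>s. hy (s,p)) has_real_derivative hxy (s,p)) (at s)"
  unfolding hy_def hxy_def by (rule ds_Dh)
lemma dt_hx: "t \<in> {-1..0} \<Longrightarrow> ((\<lambda>t. hx (q,t)) has_real_derivative hyx (q,t)) (at t within {-1..0})"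
  unfolding hx_def hyx_def by (rule dt_Dh)
lemma dt_hy: "t \<in> {-1..0} \<Longrightarrow> ((\<lambda>t. hy (q,t)) has_real_derivative hyy (q,t)) (at t within {-1..0})"
  unfolding hy_def hyy_def by (rule dt_Dh)

lemma pq_eq: "p \<in> {-1..0} \<Longrightarrow> pq h (s,p) = hx (s,p)"
  unfolding pq_def using ds_h[of p s]
  by (simp add: has_real_derivative_iff_has_vector_derivative vector_derivative_at)

lemma pp_eq: "t \<in> {-1..0} \<Longrightarrow> pp h (q,t) = hy (q,t)"
  unfolding pp_def using dt_h[of t q]
  by (simp add: has_real_derivative_iff_has_vector_derivative vector_derivative_within_closed_interval)

lemma normapp: "\<bar>blinfun_apply L v\<bar> \<le> norm L * norm v" for L :: "(real \<times> real) \<Rightarrow>\<^sub>L real"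
  using norm_blinfun[of L v] by simp

lemma normapp2: "\<bar>blinfun_apply (blinfun_apply M u) v\<bar> \<le> norm M * norm u * norm v"
  for M :: "(real \<times> real) \<Rightarrow>\<^sub>L ((real \<times> real) \<Rightarrow>\<^sub>L real)"
proof -
  have "\<bar>blinfun_apply (blinfun_apply M u) v\<bar> \<le> norm (blinfun_apply M u) * norm v" by (rule normapp)
  also have "\<dots> \<le> norm M * norm u * norm v"
    by (intro mult_right_mono norm_blinfun) simp
  finally show ?thesis .
qed

lemma n10[simp]: "norm (1::real, 0::real) = 1" and n01[simp]: "norm (0::real, 1::real) = 1"
  by (simp_all add: norm_Pair)

lemma bhx: "z \<in> Rbar \<Longrightarrow> \<bar>hx z\<bar> \<le> C"
  using normapp[of "Dh z" "(1,0)"] bDh[of z] by (simp add: hx_def)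
lemma bhy: "z \<in> Rbar \<Longrightarrow> \<bar>hy z\<bar> \<le> C"
  using normapp[of "Dh z" "(0,1)"] bDh[of z] by (simp add: hy_def)
lemma bhxx: "z \<in> Rbar \<Longrightarrow> \<bar>hxx z\<bar> \<le> C"
  using normapp2[of "D2h z" "(1,0)" "(1,0)"] bD2h[of z] by (simp add: hxx_def)
lemma bhxy: "z \<in> Rbar \<Longrightarrow> \<bar>hxy z\<bar> \<le> C"
  using normapp2[of "D2h z" "(1,0)" "(0,1)"] bD2h[of z] by (simp add: hxy_def)
lemma bhyx: "z \<in> Rbar \<Longrightarrow> \<bar>hyx z\<bar> \<le> C"
  using normapp2[of "D2h z" "(0,1)" "(1,0)"] bD2h[of z] by (simp add: hyx_def)
lemma bhyy: "z \<in> Rbar \<Longrightarrow> \<bar>hyy z\<bar> \<le> C"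
  using normapp2[of "D2h z" "(0,1)" "(0,1)"] bD2h[of z] by (simp add: hyy_def)

lemma cont_Dh: "continuous_on Rbar Dh"
  using d2h has_derivative_continuous continuous_on_eq_continuous_within by blast
lemma cont_h: "continuous_on Rbar h"
  using dh has_derivative_continuous continuous_on_eq_continuous_within by blast

lemma cont_hx: "continuous_on Rbar hx"
  unfolding hx_def by (intro continuous_intros cont_Dh)
lemma cont_hy: "continuous_on Rbar hy"
  unfolding hy_def by (intro continuous_intros cont_Dh)
lemma cont_hxx: "continuous_on Rbar hxx"
  unfolding hxx_def by (intro continuous_intros cont2)
lemma cont_hxy: "continuous_on Rbar hxy"
  unfolding hxy_def by (intro continuous_intros cont2)

lemma hyge: "z \<in> Rbar \<Longrightarrow> hy z \<ge> \<delta>"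
proof -
  assume z: "z \<in> Rbar"
  obtain q t where zz: "z = (q,t)" by (cases z)
  have t: "t \<in> closure {-1<..<0}" using z zz by simp
  have c: "continuous_on (closure {-1<..<0::real}) (\<lambda>t. hy (q,t))"
    by (rule cont_line2[OF cont_hy]) auto
  have "hy (q,t) \<ge> \<delta>"
    by (rule continuous_ge_on_closure[OF c t]) (use hyge0 pp_eq in force)
  then show ?thesis using zz by simp
qed

lemma lip_hy: "t \<in> {-1..0} \<Longrightarrow> u \<in> {-1..0} \<Longrightarrow> \<bar>hy (q,u) - hy (q,t)\<bar> \<le> C * \<bar>u - t\<bar>"
  by (rule real_deriv_bound[OF dt_hy]) (auto intro: bhyy)

lemma tay_t: "s \<in> {-1..0} \<Longrightarrow> t \<in> {-1..0} \<Longrightarrow>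
    \<bar>h (q,s) - h (q,t) - hy (q,t) * (s - t)\<bar> \<le> C * (s - t)^2"
  by (rule taylor1[OF dt_h lip_hy]) auto

lemma lip_hx: "p \<in> {-1..0} \<Longrightarrow> \<bar>hx (u,p) - hx (v,p)\<bar> \<le> C * \<bar>u - v\<bar>"
proof -
  assume p: "p \<in> {-1..0}"
  have "\<bar>hx (u,p) - hx (v,p)\<bar> \<le> C * \<bar>u - v\<bar>"
    by (rule real_deriv_bound[of "min u v" "max u v" _ "\<lambda>s. hxx (s,p)"])
       (use p in \<open>auto intro: bhxx has_field_derivative_at_within[OF ds_hx]\<close>)
  then show ?thesis .
qed

lemma tay_s: "p \<in> {-1..0} \<Longrightarrow>
    \<bar>h (u,p) - h (v,p) - hx (v,p) * (u - v)\<bar> \<le> C * (u - v)^2"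
  by (rule taylor1[of "min u v" "max u v"])
     (auto intro: lip_hx has_field_derivative_at_within[OF ds_h])

end

locale strip_lim = strip +
  fixes Fl :: "real filter" and K :: "real \<Rightarrow> real"
  assumes Fl_nb: "Fl \<noteq> bot"
    and shift: "\<And>\<tau>. filterlim (\<lambda>q. q + \<tau>) Fl Fl"
    and limK: "\<And>p. p \<in> {-1..0} \<Longrightarrow> ((\<lambda>q. h (q,p)) \<longlongrightarrow> K p) Fl"
    and seqs: "\<And>T. T > 0 \<Longrightarrow> \<exists>s::nat \<Rightarrow> real. \<forall>\<xi>. (\<forall>n. s n \<le> \<xi> n \<and> \<xi> n \<le> s n + T) \<longrightarrow> filterlim \<xi> Fl sequentially"
begin

lemma small_C: "e > 0 \<Longrightarrow> C * (e / (2 * (\<bar>C\<bar> + 1))) < e / 2"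
proof -
  assume e: "e > 0"
  have "C * (e / (2 * (\<bar>C\<bar> + 1))) \<le> \<bar>C\<bar> * (e / (2 * (\<bar>C\<bar> + 1)))"
    using e by (intro mult_right_mono) auto
  also have "\<dots> < e / 2"
    using e by (simp add: field_simps)
  finally show ?thesis .
qed

lemma hx_lim: assumes p: "p \<in> {-1..0}" shows "((\<lambda>q. hx (q,p)) \<longlongrightarrow> 0) Fl"
proof (rule tendstoI)
  fix e :: real assume e: "e > 0"
  define \<tau> where "\<tau> = e / (2 * (\<bar>C\<bar> + 1))"
  have \<tau>: "\<tau> > 0" using e by (simp add: \<tau>_def)
  have Ct: "C * \<tau> < e / 2" unfolding \<tau>_def using small_C[OF e] .
  have l1: "((\<lambda>q. h (q + \<tau>, p)) \<longlongrightarrow> K p) Fl"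
    using filterlim_compose[OF limK[OF p] shift] .
  have et: "e * \<tau> / 4 > 0" using e \<tau> by simp
  have ev: "eventually (\<lambda>q. dist (h (q + \<tau>, p)) (K p) < e * \<tau> / 4 \<and> dist (h (q,p)) (K p) < e * \<tau> / 4) Fl"
    using tendstoD[OF l1 et] tendstoD[OF limK[OF p] et] by (rule eventually_conj)
  show "eventually (\<lambda>q. dist (hx (q,p)) 0 < e) Fl"
    using ev
  proof (rule eventually_mono)
    fix q
    assume a: "dist (h (q + \<tau>, p)) (K p) < e * \<tau> / 4 \<and> dist (h (q,p)) (K p) < e * \<tau> / 4"
    have t: "\<bar>h (q + \<tau>, p) - h (q,p) - hx (q,p) * \<tau>\<bar> \<le> C * \<tau>^2"
      using tay_s[OF p, of "q + \<tau>" q] by simp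
    have eq: "\<bar>hx (q,p)\<bar> * \<tau> = \<bar>hx (q,p) * \<tau>\<bar>" using \<tau> by (simp add: abs_mult)
    have "\<bar>hx (q,p) * \<tau>\<bar> \<le> e * \<tau> / 2 + C * \<tau>^2"
      using a t unfolding dist_real_def abs_le_iff abs_less_iff by linarith
    then have "\<bar>hx (q,p)\<bar> * \<tau> \<le> e * \<tau> / 2 + C * \<tau>^2" using eq by simp
    also have "\<dots> < e * \<tau> / 2 + e / 2 * \<tau>"
      using mult_strict_right_mono[OF Ct \<tau>] by (simp add: power2_eq_square algebra_simps)
    finally have "\<bar>hx (q,p)\<bar> * \<tau> < e * \<tau>" by (simp add: mult.commute)
    then show "dist (hx (q,p)) 0 < e" using \<tau> by simp
  qed
qed

lemma hy_conv: assumes t: "t \<in> {-1..0}" shows "\<exists>l. ((\<lambda>q. hy (q,t)) \<longlongrightarrow> l) Fl"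
proof (rule filter_cauchy_tendsto[OF Fl_nb])
  fix e :: real assume e: "e > 0"
  define d where "d = min (1/2) (e / (8 * (\<bar>C\<bar> + 1)))"
  have d: "d > 0" "d \<le> 1/2" using e by (auto simp: d_def min_def)
  have Cd: "\<bar>C\<bar> * d \<le> e / 8"
  proof -
    have "\<bar>C\<bar> * d \<le> \<bar>C\<bar> * (e / (8 * (\<bar>C\<bar> + 1)))"
      by (intro mult_left_mono) (auto simp: d_def)
    also have "\<dots> \<le> e / 8" using e by (simp add: field_simps)
    finally show ?thesis .
  qed
  define s where "s = (if t \<le> -1/2 then t + d else t - d)"
  have s: "s \<in> {-1..0}" and sd: "\<bar>s - t\<bar> = d" using t d by (auto simp: s_def)
  define \<eta> where "\<eta> = e * d / 8"
  have \<eta>: "\<eta> > 0" using e d by (simp add: \<eta>_def)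
  define P where "P q \<longleftrightarrow> dist (h (q,s)) (K s) < \<eta> \<and> dist (h (q,t)) (K t) < \<eta>" for q
  have evP: "eventually P Fl"
    unfolding P_def using tendstoD[OF limK[OF s] \<eta>] tendstoD[OF limK[OF t] \<eta>] by (rule eventually_conj)
  have st2: "(s - t)^2 = d^2" using sd by (metis power2_abs)
  have key: "\<bar>hy (q,t) - hy (q',t)\<bar> < e" if "P q" "P q'" for q q'
  proof -
    have t1: "\<bar>h (q,s) - h (q,t) - hy (q,t) * (s - t)\<bar> \<le> C * d^2"
      using tay_t[OF s t, of q] st2 by simp
    have t2: "\<bar>h (q',s) - h (q',t) - hy (q',t) * (s - t)\<bar> \<le> C * d^2"
      using tay_t[OF s t, of q'] st2 by simp
    have eq: "\<bar>hy (q,t) - hy (q',t)\<bar> * d = \<bar>hy (q,t) * (s - t) - hy (q',t) * (s - t)\<bar>"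
    proof -
      have "hy (q,t) * (s - t) - hy (q',t) * (s - t) = (hy (q,t) - hy (q',t)) * (s - t)"
        by (simp add: algebra_simps)
      then show ?thesis using sd by (simp add: abs_mult)
    qed
    have "\<bar>hy (q,t) * (s - t) - hy (q',t) * (s - t)\<bar> \<le> 4 * \<eta> + 2 * C * d^2"
      using that t1 t2 unfolding P_def dist_real_def abs_le_iff abs_less_iff by linarith
    also have "\<dots> \<le> e * d / 2 + 2 * (e / 8) * d"
    proof -
      have "C * d^2 = (C * d) * d" by (simp add: power2_eq_square)
      also have "\<dots> \<le> (e / 8) * d"
      proof (intro mult_right_mono)
        show "C * d \<le> e / 8" using Cd d abs_ge_self[of C] mult_right_mono[of C "\<bar>C\<bar>" d] by linarith
      qed (use d in auto)
      finally show ?thesis by (simp add: \<eta>_def algebra_simps)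
    qed
    also have "\<dots> < e * d" using e d by simp
    finally have "\<bar>hy (q,t) - hy (q',t)\<bar> * d < e * d" using eq by simp
    then show ?thesis using d by simp
  qed
  show "\<exists>P. eventually P Fl \<and> (\<forall>x y. P x \<and> P y \<longrightarrow> \<bar>hy (x,t) - hy (y,t)\<bar> < e)"
    using evP key by blast
qed

definition "a t = Lim Fl (\<lambda>q. hy (q,t))"

lemma C0: "C \<ge> 0" using bh[of "(0,0)"] by simp

lemma hy_lim: "t \<in> {-1..0} \<Longrightarrow> ((\<lambda>q. hy (q,t)) \<longlongrightarrow> a t) Fl"
  using hy_conv[of t] tendsto_Lim[of Fl] Fl_nb unfolding a_def by fastforce

lemma a_lip: "t \<in> {-1..0} \<Longrightarrow> u \<in> {-1..0} \<Longrightarrow> \<bar>a u - a t\<bar> \<le> C * \<bar>u - t\<bar>"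
  by (rule tendsto_le[OF _ tendsto_const tendsto_rabs[OF tendsto_diff[OF hy_lim hy_lim]]])
     (auto simp: Fl_nb intro!: always_eventually lip_hy)

lemma a_ge: "t \<in> {-1..0} \<Longrightarrow> a t \<ge> \<delta>"
  by (rule tendsto_lowerbound[OF hy_lim]) (auto simp: Fl_nb intro!: always_eventually hyge)

lemma a_cont: "continuous_on {-1..0} a"
proof (rule lipschitz_on_continuous_on)
  show "C-lipschitz_on {-1..0} a"
    by (rule lipschitz_onI) (auto simp: dist_real_def C0 intro: a_lip[simplified])
qed

lemma K_tay: "s \<in> {-1..0} \<Longrightarrow> t \<in> {-1..0} \<Longrightarrow> \<bar>K s - K t - a t * (s - t)\<bar> \<le> C * (s - t)^2"
  by (rule tendsto_le[OF _ tendsto_const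
        tendsto_rabs[OF tendsto_diff[OF tendsto_diff[OF limK limK] tendsto_mult[OF hy_lim tendsto_const]]]])
     (auto simp: Fl_nb intro!: always_eventually tay_t)

lemma K_deriv: assumes t: "t \<in> {-1..0}" shows "(K has_real_derivative a t) (at t within {-1..0})"
proof -
  have L0: "((\<lambda>y. (K y - K t) / (y - t) - a t) \<longlongrightarrow> 0) (at t within {-1..0})"
  proof (rule Lim_null_comparison)
    show "eventually (\<lambda>y. norm ((K y - K t) / (y - t) - a t) \<le> C * \<bar>y - t\<bar>) (at t within {-1..0})"
      unfolding eventually_at_filter
    proof (intro always_eventually allI impI)
      fix y assume y: "y \<noteq> t" "y \<in> {-1..0}"
      have "(K y - K t) / (y - t) - a t = (K y - K t - a t * (y - t)) / (y - t)"
        using y by (simp add: field_simps)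
      also have "norm \<dots> \<le> C * (y - t)^2 / \<bar>y - t\<bar>"
        using K_tay[OF y(2) t] y by (simp add: divide_right_mono)
      also have "\<dots> = C * \<bar>y - t\<bar>"
      proof -
        have "(y - t) * (y - t) / \<bar>y - t\<bar> = \<bar>y - t\<bar>"
          using y(1) by (cases "y < t") (auto simp: abs_if field_simps)
        then show ?thesis by (simp add: power2_eq_square times_divide_eq_right[symmetric] del: times_divide_eq_right)
      qed
      finally show "norm ((K y - K t) / (y - t) - a t) \<le> C * \<bar>y - t\<bar>" .
    qed
    show "((\<lambda>y. C * \<bar>y - t\<bar>) \<longlongrightarrow> 0) (at t within {-1..0})"
      by (auto intro!: tendsto_eq_intros)
  qed
  have "((\<lambda>y. (K y - K t) / (y - t)) \<longlongrightarrow> a t) (at t within {-1..0})"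
    using tendsto_add[OF L0 tendsto_const[of "a t"]] by simp
  then show ?thesis by (simp add: has_field_derivative_iff)
qed

end

locale strip_pde = strip_lim +
  fixes \<rho> H :: "real \<Rightarrow> real" and F :: real and b b' r :: "real \<Rightarrow> real"
  assumes Fpos: "F > 0"
    and b_deriv: "\<And>t. t \<in> {-1..0} \<Longrightarrow> (b has_real_derivative b' t) (at t within {-1..0})"
    and dIH: "\<And>t. t \<in> {-1..0} \<Longrightarrow> dI H t = b t"
    and bpos: "\<And>t. t \<in> {-1..0} \<Longrightarrow> b t > 0"
    and r_cont: "continuous_on {-1..0} r"
    and dIr: "\<And>t. t \<in> {-1..0} \<Longrightarrow> dI \<rho> t = r t"
    and H_cont: "continuous_on {-1..0} H"
    and pde: "height_eq \<rho> H F h"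
begin

definition "Ah q t = -(1 + (hx (q,t))\<^sup>2) / (2 * (hy (q,t))\<^sup>2) + 1 / (2 * (b t)\<^sup>2)"
definition "fA t = -1 / (2 * (a t)\<^sup>2) + 1 / (2 * (b t)\<^sup>2)"

lemma hy_pos: "z \<in> Rbar \<Longrightarrow> hy z > 0" using hyge dpos by (meson less_le_trans)

lemma a_pos: "t \<in> {-1..0} \<Longrightarrow> a t > 0" using a_ge dpos by (meson less_le_trans)

lemma b_cont: "continuous_on {-1..0} b"
  using b_deriv by (meson DERIV_continuous continuous_on_eq_continuous_within)

lemma Alit_eq: "t \<in> {-1..0} \<Longrightarrow>
   - (1 + (pq h (q, t))\<^sup>2) / (2 * (pp h (q, t))\<^sup>2) + 1 / (2 * (dI H t)\<^sup>2) = Ah q t"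
  by (simp add: pq_eq pp_eq dIH Ah_def)

lemma Ah_lim: assumes t: "t \<in> {-1..0}" shows "((\<lambda>q. Ah q t) \<longlongrightarrow> fA t) Fl"
proof -
  have "((\<lambda>q. -(1 + (hx (q,t))\<^sup>2) / (2 * (hy (q,t))\<^sup>2) + 1 / (2 * (b t)\<^sup>2)) \<longlongrightarrow>
        -(1 + 0\<^sup>2) / (2 * (a t)\<^sup>2) + 1 / (2 * (b t)\<^sup>2)) Fl"
    using a_pos[OF t] by (intro tendsto_intros hx_lim[OF t] hy_lim[OF t]) auto
  then show ?thesis by (simp add: Ah_def fA_def)
qed

lemma top_bc: "1 / (2 * (a 0)\<^sup>2) - 1 / (2 * (b 0)\<^sup>2) + (1 / F\<^sup>2) * \<rho> 0 * (K 0 - 1) = 0"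
proof -
  have z: "(0::real) \<in> {-1..0}" by simp
  have eq: "\<And>q. (1 + (hx (q, 0))\<^sup>2) / (2 * (hy (q, 0))\<^sup>2) - 1 / (2 * (b 0)\<^sup>2)
          + (1 / F\<^sup>2) * \<rho> 0 * (h (q, 0) - 1) = 0"
    using pde z unfolding height_eq_def by (simp add: pq_eq pp_eq dIH)
  have "((\<lambda>q. (1 + (hx (q, 0))\<^sup>2) / (2 * (hy (q, 0))\<^sup>2) - 1 / (2 * (b 0)\<^sup>2)
          + (1 / F\<^sup>2) * \<rho> 0 * (h (q, 0) - 1)) \<longlongrightarrow>
        (1 + 0\<^sup>2) / (2 * (a 0)\<^sup>2) - 1 / (2 * (b 0)\<^sup>2) + (1 / F\<^sup>2) * \<rho> 0 * (K 0 - 1)) Fl"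
    using a_pos[OF z] by (intro tendsto_intros hx_lim[OF z] hy_lim[OF z] limK[OF z]) auto
  then have "((\<lambda>q. 0::real) \<longlongrightarrow>
        (1 + 0\<^sup>2) / (2 * (a 0)\<^sup>2) - 1 / (2 * (b 0)\<^sup>2) + (1 / F\<^sup>2) * \<rho> 0 * (K 0 - 1)) Fl"
    by (simp only: eq)
  from tendsto_unique[OF Fl_nb this tendsto_const] show ?thesis by simp
qed

lemma bot_bc: "K (-1) = 0"
proof -
  have m: "(-1::real) \<in> {-1..0}" by simp
  have "((\<lambda>q. 0::real) \<longlongrightarrow> K (-1)) Fl"
    using limK[OF m] pde unfolding height_eq_def by simp
  from tendsto_unique[OF Fl_nb this tendsto_const] show ?thesis by simp
qed

definition "Bq q t = hx (q,t) / hy (q,t)"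
definition "Bs q t = (hxx (q,t) * hy (q,t) - hx (q,t) * hxy (q,t)) / (hy (q,t))\<^sup>2"
definition "E q t = (1 / F\<^sup>2) * r t * (h (q,t) - H t) - Bs q t"

lemma dB: "t \<in> {-1..0} \<Longrightarrow> ((\<lambda>s. Bq s t) has_real_derivative Bs q t) (at q)"
  unfolding Bq_def Bs_def
  using hy_pos[of "(q,t)"]
  by (auto intro!: derivative_eq_intros ds_hx ds_hy simp: power2_eq_square)

lemma Blit_deriv: "t \<in> {-1..0} \<Longrightarrow> deriv (\<lambda>s. pq h (s, t) / pp h (s, t)) q = Bs q t"
proof -
  assume t: "t \<in> {-1..0}"
  have "(\<lambda>s. pq h (s, t) / pp h (s, t)) = (\<lambda>s. Bq s t)"
    using t by (auto simp: pq_eq pp_eq Bq_def)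
  then show ?thesis using DERIV_imp_deriv[OF dB[OF t]] by simp
qed

lemma dA_within: "t \<in> {-1..0} \<Longrightarrow> \<exists>X. ((\<lambda>t. Ah q t) has_real_derivative X) (at t within {-1..0})"
proof -
  assume t: "t \<in> {-1..0}"
  have "hy (q,t) \<noteq> 0" "b t \<noteq> 0" using hy_pos[of "(q,t)"] bpos[OF t] t by auto
  then show ?thesis unfolding Ah_def
    apply (intro exI)
    apply (rule derivative_eq_intros dt_hx[OF t] dt_hy[OF t] b_deriv[OF t] refl | simp)+
    done
qed

definition "Alit q t = - (1 + (pq h (q, t))\<^sup>2) / (2 * (pp h (q, t))\<^sup>2) + 1 / (2 * (dI H t)\<^sup>2)"

lemma Ah_cont: "S \<subseteq> {-1..0} \<Longrightarrow> continuous_on S (\<lambda>t. Ah q t)"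
proof -
  assume S: "S \<subseteq> {-1..0}"
  have c1: "continuous_on S (\<lambda>t. hx (q,t))" by (rule cont_line2[OF cont_hx S])
  have c2: "continuous_on S (\<lambda>t. hy (q,t))" by (rule cont_line2[OF cont_hy S])
  have c3: "continuous_on S b" using b_cont S continuous_on_subset by blast
  have n1: "\<forall>t\<in>S. hy (q,t) \<noteq> 0" using S hy_pos by (metis Rbar_iff less_irrefl subsetD)
  have n2: "\<forall>t\<in>S. b t \<noteq> 0" using S bpos by (metis less_irrefl subsetD)
  show ?thesis unfolding Ah_def
    using n1 n2 by (auto intro!: continuous_intros c1 c2 c3)
qed

lemma dA_at: assumes t: "t \<in> {-1<..<0}" shows "((\<lambda>t. Alit q t) has_real_derivative deriv (\<lambda>t. Alit q t) t) (at t)"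
proof -
  have t': "t \<in> {-1..0}" using t by auto
  obtain X where X: "((\<lambda>t. Ah q t) has_real_derivative X) (at t within {-1..0})"
    using dA_within[OF t'] by blast
  have "at t within {-1..0} = at t" using t by (intro at_within_interior) simp
  with X have X': "((\<lambda>t. Ah q t) has_real_derivative X) (at t)" by simp
  have "((\<lambda>t. Alit q t) has_real_derivative X) (at t)"
  proof (rule has_field_derivative_transform_within_open[OF X' _ t])
    fix x assume "x \<in> {-1<..<0::real}"
    then show "Ah q x = Alit q x" using Alit_eq[of x q] by (simp add: Alit_def)
  qed simp
  then show ?thesis using DERIV_imp_deriv by metis
qed

lemma ftc_q: assumes p: "p \<in> {-1..0}" shows "(E q has_integral (Ah q 0 - Ah q p)) {p..0}"
proof -
  have eqs: "\<And>t. t \<in> {p..0} \<Longrightarrow> Alit q t = Ah q t"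
  proof -
    fix t assume "t \<in> {p..0}"
    then have "t \<in> {-1..0}" using p by auto
    then show "Alit q t = Ah q t" using Alit_eq[of t q] by (simp add: Alit_def)
  qed
  have "(E q has_integral (Alit q 0 - Alit q p)) {p..0}"
  proof (rule fundamental_theorem_of_calculus_interior)
    show "p \<le> 0" using p by simp
    show "continuous_on {p..0} (\<lambda>t. Alit q t)"
      by (rule continuous_on_eq[OF Ah_cont[of "{p..0}" q]]) (use p eqs in auto)
    fix t assume t: "t \<in> {p<..<0}"
    have t': "t \<in> {-1<..<0}" "t \<in> {-1..0}" using t p by auto
    have "deriv (\<lambda>t. Alit q t) t + deriv (\<lambda>s. pq h (s, t) / pp h (s, t)) q
        - (1 / F\<^sup>2) * dI \<rho> t * (h (q, t) - H t) = 0"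
      using pde t' unfolding height_eq_def Alit_def by auto
    then have "deriv (\<lambda>t. Alit q t) t = E q t"
      using Blit_deriv[OF t'(2)] dIr[OF t'(2)] by (simp add: E_def)
    then show "((\<lambda>t. Alit q t) has_vector_derivative E q t) (at t)"
      using dA_at[OF t'(1), of q] by (simp add: has_real_derivative_iff_has_vector_derivative)
  qed
  then show ?thesis using eqs p by simp
qed

lemma hy_nz: "\<forall>z\<in>Rbar. hy z \<noteq> 0"
proof
  fix z assume "z \<in> Rbar" from hy_pos[OF this] show "hy z \<noteq> 0" by simp
qed

definition "Bs' z = (hxx z * hy z - hx z * hxy z) / (hy z)\<^sup>2"
definition "Bq' z = hx z / hy z"

lemma cont_Bs': "continuous_on Rbar Bs'"
  unfolding Bs'_def
  by (intro continuous_intros cont_hxx cont_hy cont_hx cont_hxy) (use hy_nz in auto)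

lemma cont_Bq': "continuous_on Rbar Bq'"
  unfolding Bq'_def
  by (intro continuous_intros cont_hy cont_hx) (use hy_nz in auto)

lemma Bs_eq: "Bs q t = Bs' (q,t)" by (simp add: Bs_def Bs'_def)
lemma Bq_eq: "Bq q t = Bq' (q,t)" by (simp add: Bq_def Bq'_def)

lemma cont_Bs: "S \<subseteq> {-1..0} \<Longrightarrow> continuous_on S (Bs q)"
  unfolding Bs_eq by (rule cont_line2[OF cont_Bs'])
lemma cont_Bq: "S \<subseteq> {-1..0} \<Longrightarrow> continuous_on S (Bq q)"
  unfolding Bq_eq by (rule cont_line2[OF cont_Bq'])

definition "g1 q t = (1 / F\<^sup>2) * r t * (h (q,t) - H t)"

lemma cont_g1: "S \<subseteq> {-1..0} \<Longrightarrow> continuous_on S (g1 q)"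
proof -
  assume S: "S \<subseteq> {-1..0}"
  have "continuous_on S r" "continuous_on S H" using S r_cont H_cont continuous_on_subset by blast+
  moreover have "continuous_on S (\<lambda>t. h (q,t))" by (rule cont_line2[OF cont_h S])
  ultimately show ?thesis unfolding g1_def by (intro continuous_intros)
qed

definition "Phi p q = integral {p..0} (Bq q)"
definition "R p q = integral {p..0} (g1 q) - (Ah q 0 - Ah q p)"

lemma Phi_deriv: assumes p: "p \<in> {-1..0}" shows "(Phi p has_real_derivative R p q) (at q)"
proof -
  have sub: "{p..0} \<subseteq> {-1..0}" using p by auto
  have L: "((\<lambda>x. integral (cbox p 0) (Bq x)) has_field_derivative integral (cbox p 0) (Bs q)) (at q within UNIV)"
  proof (rule leibniz_rule_field_derivative)
    show "((\<lambda>x. Bq x t) has_field_derivative Bs x t) (at x within UNIV)" if "t \<in> cbox p 0" for x t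
      using dB[of t x] that sub by auto
    show "Bq x integrable_on cbox p 0" for x
      using integrable_continuous_real[OF cont_Bq[OF sub]] by simp
    have "continuous_on (UNIV \<times> {p..0}) Bs'"
      by (rule continuous_on_subset[OF cont_Bs']) (use sub in \<open>auto simp: Rbar_def\<close>)
    then show "continuous_on (UNIV \<times> cbox p 0) (\<lambda>(x, t). Bs x t)"
      by (simp add: Bs_eq[abs_def] case_prod_beta')
  qed auto
  have "integral {p..0} (E q) = Ah q 0 - Ah q p" using ftc_q[OF p] by (rule integral_unique)
  moreover have "integral {p..0} (E q) = integral {p..0} (g1 q) - integral {p..0} (Bs q)"
    unfolding E_def g1_def[symmetric]
    by (rule integral_diff) (auto intro!: integrable_continuous_real cont_g1 cont_Bs sub)
  ultimately have "integral {p..0} (Bs q) = R p q" by (simp add: R_def)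
  then show ?thesis using L by (simp add: Phi_def[abs_def])
qed

lemma Phi_bound: assumes p: "p \<in> {-1..0}" shows "\<bar>Phi p q\<bar> \<le> C / \<delta>"
proof -
  have sub: "{p..0} \<subseteq> {-1..0}" using p by auto
  have b: "norm (Bq q t) \<le> C / \<delta>" if "t \<in> {p..0}" for t
  proof -
    have z: "(q,t) \<in> Rbar" using that sub by auto
    have "\<bar>hx (q,t)\<bar> / hy (q,t) \<le> C / \<delta>"
      using bhx[OF z] hyge[OF z] dpos C0 by (intro frac_le) auto
    then show ?thesis using hy_pos[OF z] by (simp add: Bq_def abs_div)
  qed
  have "norm (integral {p..0} (Bq q)) \<le> C / \<delta> * (0 - p)"
    by (rule integral_bound) (use p b cont_Bq[OF sub] in auto)
  also have "\<dots> \<le> C / \<delta> * 1" using p C0 dpos by (intro mult_left_mono) auto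
  finally show ?thesis by (simp add: Phi_def)
qed

definition "gK t = (1 / F\<^sup>2) * r t * (K t - H t)"

lemma R_seq:
  assumes p: "p \<in> {-1..0}" and xi: "filterlim \<xi> Fl sequentially"
  shows "(\<lambda>n. R p (\<xi> n)) \<longlonglongrightarrow> integral {p..0} gK - (fA 0 - fA p)"
proof -
  have sub: "{p..0} \<subseteq> {-1..0}" using p by auto
  have z: "(0::real) \<in> {-1..0}" by simp
  have A0: "(\<lambda>n. Ah (\<xi> n) 0) \<longlonglongrightarrow> fA 0" by (rule filterlim_compose[OF Ah_lim[OF z] xi])
  have Ap: "(\<lambda>n. Ah (\<xi> n) p) \<longlonglongrightarrow> fA p" by (rule filterlim_compose[OF Ah_lim[OF p] xi])
  define bnd where "bnd t = (1 / F\<^sup>2) * \<bar>r t\<bar> * (C + \<bar>H t\<bar>)" for t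
  have "(\<lambda>n. integral {p..0} (g1 (\<xi> n))) \<longlonglongrightarrow> integral {p..0} gK"
  proof (rule dominated_convergence(2))
    show "g1 (\<xi> k) integrable_on {p..0}" for k by (rule integrable_continuous_real[OF cont_g1[OF sub]])
    have "continuous_on {p..0} r" "continuous_on {p..0} H" using sub r_cont H_cont continuous_on_subset by blast+
    then show "bnd integrable_on {p..0}" unfolding bnd_def by (intro integrable_continuous_real continuous_intros)
    show "norm (g1 (\<xi> k) x) \<le> bnd x" if "x \<in> {p..0}" for k x
    proof -
      have zz: "(\<xi> k, x) \<in> Rbar" using that sub by auto
      have "\<bar>h (\<xi> k, x) - H x\<bar> \<le> C + \<bar>H x\<bar>" using bh[OF zz] by linarith
      then have "\<bar>r x\<bar> * \<bar>h (\<xi> k, x) - H x\<bar> \<le> \<bar>r x\<bar> * (C + \<bar>H x\<bar>)" by (intro mult_left_mono) auto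
      then show ?thesis unfolding g1_def bnd_def using Fpos
        by (simp add: abs_mult divide_right_mono)
    qed
    show "(\<lambda>k. g1 (\<xi> k) x) \<longlonglongrightarrow> gK x" if "x \<in> {p..0}" for x
    proof -
      have "(\<lambda>k. h (\<xi> k, x)) \<longlonglongrightarrow> K x" using filterlim_compose[OF limK xi] that sub by auto
      then show ?thesis unfolding g1_def gK_def by (intro tendsto_intros)
    qed
  qed
  then show ?thesis unfolding R_def by (intro tendsto_intros A0 Ap)
qed

lemma ode1: assumes p: "p \<in> {-1..0}" shows "integral {p..0} gK = fA 0 - fA p"
proof (rule ccontr)
  define L where "L = integral {p..0} gK - (fA 0 - fA p)"
  assume "integral {p..0} gK \<noteq> fA 0 - fA p"
  then have L0: "L \<noteq> 0" by (simp add: L_def)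
  define T where "T = 4 * (C / \<delta>) / \<bar>L\<bar> + 1"
  have Cd: "C / \<delta> \<ge> 0" using C0 dpos by simp
  have "4 * (C / \<delta>) / \<bar>L\<bar> \<ge> 0" using Cd by (intro divide_nonneg_nonneg) auto
  then have T: "T > 0" unfolding T_def by linarith
  obtain s where s: "\<And>\<xi>. (\<forall>n. s n \<le> \<xi> n \<and> \<xi> n \<le> s n + T) \<Longrightarrow> filterlim \<xi> Fl sequentially"
    using seqs[OF T] by blast
  have "\<forall>n. \<exists>z. s n < z \<and> z < s n + T \<and> Phi p (s n + T) - Phi p (s n) = (s n + T - s n) * R p z"
  proof
    fix n
    have "s n < s n + T" using T by simp
    from MVT2[OF this Phi_deriv[OF p]]
    show "\<exists>z. s n < z \<and> z < s n + T \<and> Phi p (s n + T) - Phi p (s n) = (s n + T - s n) * R p z" .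
  qed
  then obtain \<xi> where xi: "\<And>n. s n < \<xi> n \<and> \<xi> n < s n + T \<and> Phi p (s n + T) - Phi p (s n) = T * R p (\<xi> n)"
    by (metis add_diff_cancel_left')
  have fl: "filterlim \<xi> Fl sequentially" using xi by (intro s) (auto intro: less_imp_le)
  have lim: "(\<lambda>n. T * R p (\<xi> n)) \<longlonglongrightarrow> T * L"
    unfolding L_def by (intro tendsto_intros R_seq[OF p fl])
  have bd: "\<bar>T * R p (\<xi> n)\<bar> \<le> 2 * (C / \<delta>)" for n
    using xi[of n] Phi_bound[OF p, of "s n + T"] Phi_bound[OF p, of "s n"] by linarith
  have "\<bar>T * L\<bar> \<le> 2 * (C / \<delta>)"
    by (rule tendsto_le[OF _ tendsto_const tendsto_rabs[OF lim]]) (use bd in auto)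
  moreover have "\<bar>T * L\<bar> = 4 * (C / \<delta>) + \<bar>L\<bar>"
  proof -
    have "\<bar>T * L\<bar> = T * \<bar>L\<bar>" using T by (simp add: abs_mult)
    also have "\<dots> = 4 * (C / \<delta>) / \<bar>L\<bar> * \<bar>L\<bar> + \<bar>L\<bar>" by (simp add: T_def distrib_right)
    also have "\<dots> = 4 * (C / \<delta>) + \<bar>L\<bar>" using L0 by simp
    finally show ?thesis .
  qed
  ultimately show False using L0 Cd by simp
qed

end


locale ode_loc =
  fixes K a H b \<rho> r :: "real \<Rightarrow> real" and F :: real
  assumes Fpos: "F > 0"
    and Kd: "\<And>t. t \<in> {-1..0} \<Longrightarrow> (K has_real_derivative a t) (at t within {-1..0})"
    and a_cont: "continuous_on {-1..0} a"
    and a_pos: "\<And>t. t \<in> {-1..0} \<Longrightarrow> a t > 0"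
    and Hd: "\<And>t. t \<in> {-1..0} \<Longrightarrow> (H has_real_derivative b t) (at t within {-1..0})"
    and b_cont: "continuous_on {-1..0} b"
    and b_pos: "\<And>t. t \<in> {-1..0} \<Longrightarrow> b t > 0"
    and rd: "\<And>t. t \<in> {-1..0} \<Longrightarrow> (\<rho> has_real_derivative r t) (at t within {-1..0})"
    and r_cont: "continuous_on {-1..0} r"
    and rho_pos: "\<And>t. t \<in> {-1..0} \<Longrightarrow> \<rho> t > 0"
    and r_le: "\<And>t. t \<in> {-1..0} \<Longrightarrow> r t \<le> 0"
    and H_bot: "H (-1) = 0" and H_top: "H 0 = 1" and K_bot: "K (-1) = 0"
    and ode: "\<And>p. p \<in> {-1..0} \<Longrightarrow> integral {p..0} (\<lambda>t. (1 / F\<^sup>2) * r t * (K t - H t)) =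
        (-1 / (2 * (a 0)\<^sup>2) + 1 / (2 * (b 0)\<^sup>2)) - (-1 / (2 * (a p)\<^sup>2) + 1 / (2 * (b p)\<^sup>2))"
    and top: "1 / (2 * (a 0)\<^sup>2) - 1 / (2 * (b 0)\<^sup>2) + (1 / F\<^sup>2) * \<rho> 0 * (K 0 - 1) = 0"
begin

definition "w t = K t - H t"
definition "f t = 1 / (2 * (b t)\<^sup>2) - 1 / (2 * (a t)\<^sup>2)"
definition "g t = (1 / F\<^sup>2) * r t * w t"
definition "G t = (1 / F\<^sup>2) * integral {t..0} (\<lambda>s. \<rho> s * b s)"

lemma K_cont: "continuous_on {-1..0} K"
  using Kd by (meson DERIV_continuous continuous_on_eq_continuous_within)
lemma H_cont: "continuous_on {-1..0} H"
  using Hd by (meson DERIV_continuous continuous_on_eq_continuous_within)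
lemma rho_cont: "continuous_on {-1..0} \<rho>"
  using rd by (meson DERIV_continuous continuous_on_eq_continuous_within)
lemma w_cont: "continuous_on {-1..0} w"
  unfolding w_def[abs_def] by (intro continuous_intros K_cont H_cont)
lemma g_cont: "continuous_on {-1..0} g"
  unfolding g_def[abs_def] by (intro continuous_intros r_cont w_cont)

lemma wd: "t \<in> {-1..0} \<Longrightarrow> (w has_real_derivative (a t - b t)) (at t within {-1..0})"
  unfolding w_def[abs_def] by (intro derivative_intros Kd Hd)

lemma g_eq: "g = (\<lambda>t. (1 / F\<^sup>2) * r t * (K t - H t))"
  by (simp add: fun_eq_iff g_def w_def)

lemma f_eq: "p \<in> {-1..0} \<Longrightarrow> f p = f 0 - integral {p..0} g"
  using ode[of p] unfolding g_eq f_def by linarith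

lemma f0: "f 0 = (1 / F\<^sup>2) * \<rho> 0 * w 0"
  using top H_top by (simp add: f_def w_def)

lemma f_deriv: assumes t: "t \<in> {-1..0}" shows "(f has_real_derivative g t) (at t within {-1..0})"
proof -
  have "((\<lambda>p. f 0 - integral {p..0} g) has_real_derivative g t) (at t within {-1..0})"
    by (rule DERIV_rhs[OF DERIV_diff[OF DERIV_const[of "f 0"] int_upper_deriv[OF g_cont t]]]) simp
  then show ?thesis
  proof (rule has_field_derivative_transform_within[OF _ zero_less_one t])
    fix x :: real assume "x \<in> {-1..0}"
    from f_eq[OF this] show "f 0 - integral {x..0} g = f x" by (rule sym)
  qed
qed

lemma G_deriv: assumes t: "t \<in> {-1..0}"
  shows "(G has_real_derivative (- (1 / F\<^sup>2) * \<rho> t * b t)) (at t within {-1..0})"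
proof -
  have c: "continuous_on {-1..0} (\<lambda>s. \<rho> s * b s)" by (intro continuous_intros rho_cont b_cont)
  show ?thesis unfolding G_def[abs_def]
    by (rule DERIV_rhs[OF DERIV_cmult[OF int_upper_deriv[OF c t], of "1 / F\<^sup>2"]]) simp
qed

lemma G_cont: "continuous_on {-1..0} G"
  using G_deriv by (meson DERIV_continuous continuous_on_eq_continuous_within)

definition "Psi t = G t * w t - (1 / (2 * F\<^sup>2)) * (\<rho> t * (w t * w t)) + (1 / 2) * (f t * w t)"
definition "Psi' t = (- (1 / F\<^sup>2) * \<rho> t * b t) * w t + G t * (a t - b t)
   - (r t * (w t)\<^sup>2 + 2 * \<rho> t * w t * (a t - b t)) / (2 * F\<^sup>2)
   + (g t * w t + f t * (a t - b t)) / 2"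

lemma Psi_deriv: assumes t: "t \<in> {-1..0}" shows "(Psi has_real_derivative Psi' t) (at t within {-1..0})"
proof -
  have Fnz: "F \<noteq> 0" using Fpos by simp
  note d1 = DERIV_mult[OF G_deriv[OF t] wd[OF t]]
  note d2 = DERIV_cmult[OF DERIV_mult[OF rd[OF t] DERIV_mult[OF wd[OF t] wd[OF t]]], of "1 / (2 * F\<^sup>2)"]
  note d3 = DERIV_cmult[OF DERIV_mult[OF f_deriv[OF t] wd[OF t]], of "1 / 2"]
  note d = DERIV_add[OF DERIV_diff[OF d1 d2] d3]
  have e: "Psi = (\<lambda>x. G x * w x - 1 / (2 * F\<^sup>2) * (\<rho> x * (w x * w x)) + 1 / 2 * (f x * w x))"
    by (simp add: fun_eq_iff Psi_def)
  have v: "- (1 / F\<^sup>2) * \<rho> t * b t * w t + (a t - b t) * G t -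
     1 / (2 * F\<^sup>2) * (r t * (w t * w t) + ((a t - b t) * w t + (a t - b t) * w t) * \<rho> t) +
     1 / 2 * (g t * w t + (a t - b t) * f t) = Psi' t"
    by (simp add: Psi'_def power2_eq_square field_simps Fnz)
  show ?thesis using d unfolding e v .
qed

definition "IK t = (1 / (2 * (a t)\<^sup>2) + 1 / (2 * (b t)\<^sup>2) - (1 / F\<^sup>2) * \<rho> t * (K t - H t) + G t) * a t"
definition "IH t = (1 / (2 * (b t)\<^sup>2) + 1 / (2 * (b t)\<^sup>2) + G t) * b t"
definition "cube t = (a t - b t)^3 / (4 * (a t)\<^sup>2 * (b t)\<^sup>2)"

lemma ident: "t \<in> {-1..0} \<Longrightarrow> IK t - IH t = Psi' t + cube t"
proof -
  assume t: "t \<in> {-1..0}"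
  show "IK t - IH t = Psi' t + cube t"
    using alg_id[of "a t" "b t" F "f t" "\<rho> t" "K t - H t" "G t" "r t"] a_pos[OF t] b_pos[OF t] Fpos
    unfolding IK_def IH_def Psi'_def cube_def g_def by (simp add: w_def f_def)
qed

lemma a_nz: "\<forall>t\<in>{-1..0}. a t \<noteq> 0" using a_pos by force
lemma b_nz: "\<forall>t\<in>{-1..0}. b t \<noteq> 0" using b_pos by force

lemma IK_int: "IK integrable_on {-1..0}"
  unfolding IK_def[abs_def] using a_nz b_nz
  by (intro integrable_continuous_real continuous_intros a_cont b_cont rho_cont K_cont H_cont G_cont) auto
lemma IH_int: "IH integrable_on {-1..0}"
  unfolding IH_def[abs_def] using a_nz b_nz
  by (intro integrable_continuous_real continuous_intros a_cont b_cont G_cont) auto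
lemma cube_cont: "continuous_on {-1..0} cube"
  unfolding cube_def[abs_def] using a_nz b_nz
  by (intro continuous_intros a_cont b_cont) auto

lemma Psi_int: "(Psi' has_integral (Psi 0 - Psi (-1))) {-1..0}"
  by (rule fundamental_theorem_of_calculus)
     (auto simp: has_real_derivative_iff_has_vector_derivative[symmetric] intro: Psi_deriv)

lemma Psi_m1: "Psi (-1) = 0" by (simp add: Psi_def w_def K_bot H_bot)

lemma G0: "G 0 = 0"
proof -
  have "integral {0..0} (\<lambda>s. \<rho> s * b s) = 0" using integral_refl[of 0] by simp
  then show ?thesis unfolding G_def by simp
qed

lemma Psi_0: "Psi 0 = 0" by (simp add: Psi_def G0 f0 power2_eq_square)

lemma cube_int0:
  assumes S: "integral {-1..0} IK = integral {-1..0} IH"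
  shows "(cube has_integral 0) {-1..0}"
proof -
  have "((\<lambda>t. IK t - IH t) has_integral (integral {-1..0} IK - integral {-1..0} IH)) {-1..0}"
    by (rule has_integral_diff[OF integrable_integral[OF IK_int] integrable_integral[OF IH_int]])
  then have "((\<lambda>t. IK t - IH t) has_integral 0) {-1..0}" using S by simp
  from has_integral_diff[OF this Psi_int] have "((\<lambda>t. IK t - IH t - Psi' t) has_integral 0) {-1..0}"
    by (simp add: Psi_0 Psi_m1)
  then show ?thesis by (rule has_integral_eq[rotated]) (simp add: ident)
qed

lemma ode_main:
  assumes S: "integral {-1..0} IK = integral {-1..0} IH"
    and ord: "(\<forall>t\<in>{-1..0}. K t \<ge> H t) \<or> (\<forall>t\<in>{-1..0}. K t \<le> H t)"
  shows "\<forall>t\<in>{-1..0}. K t = H t"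
proof -
  have ab_iff: "a t \<ge> b t \<longleftrightarrow> f t \<ge> 0" if t: "t \<in> {-1..0}" for t
  proof -
    have ap: "a t > 0" and bp: "b t > 0" using a_pos b_pos t by auto
    have "f t \<ge> 0 \<longleftrightarrow> 1 / (2 * (a t)\<^sup>2) \<le> 1 / (2 * (b t)\<^sup>2)" by (simp add: f_def)
    also have "\<dots> \<longleftrightarrow> (b t)\<^sup>2 \<le> (a t)\<^sup>2" using ap bp by (simp add: field_simps)
    also have "\<dots> \<longleftrightarrow> b t \<le> a t" using ap bp by (simp add: power2_le_iff_abs_le abs_of_pos)
    finally show ?thesis by simp
  qed
  have ab_iff2: "a t \<le> b t \<longleftrightarrow> f t \<le> 0" if t: "t \<in> {-1..0}" for t
  proof -
    have ap: "a t > 0" and bp: "b t > 0" using a_pos b_pos t by auto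
    have "f t \<le> 0 \<longleftrightarrow> 1 / (2 * (b t)\<^sup>2) \<le> 1 / (2 * (a t)\<^sup>2)" by (simp add: f_def)
    also have "\<dots> \<longleftrightarrow> (a t)\<^sup>2 \<le> (b t)\<^sup>2" using ap bp by (simp add: field_simps)
    also have "\<dots> \<longleftrightarrow> a t \<le> b t" using ap bp by (simp add: power2_le_iff_abs_le abs_of_pos)
    finally show ?thesis by simp
  qed
  have gint: "g integrable_on {p..0}" if "p \<in> {-1..0}" for p
    using integrable_continuous_real[OF continuous_on_subset[OF g_cont]] that by auto
  have F2: "1 / F\<^sup>2 > 0" using Fpos by simp
  have ab: "\<forall>t\<in>{-1..0}. a t = b t"
  proof (cases "\<forall>t\<in>{-1..0}. K t \<ge> H t")
    case True
    have wge: "w t \<ge> 0" if "t \<in> {-1..0}" for t using True that by (simp add: w_def)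
    have fge: "f t \<ge> 0" if t: "t \<in> {-1..0}" for t
    proof -
      have "integral {t..0} (\<lambda>s. - g s) \<ge> 0"
      proof (rule integral_nonneg)
        show "(\<lambda>s. - g s) integrable_on {t..0}" using integrable_neg[OF gint[OF t]] .
        fix s assume "s \<in> {t..0}"
        then have s: "s \<in> {-1..0}" using t by auto
        have "r s * w s \<le> 0" using r_le[OF s] wge[OF s] by (simp add: mult_nonpos_nonneg)
        then show "0 \<le> - g s" using Fpos unfolding g_def by (simp add: divide_nonpos_pos)
      qed
      moreover have "integral {t..0} (\<lambda>s. - g s) = - integral {t..0} g" by (rule integral_neg)
      moreover have "f 0 \<ge> 0" unfolding f0 using F2 rho_pos[of 0] wge[of 0] by simp
      ultimately show ?thesis using f_eq[OF t] by linarith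
    qed
    have cge: "cube t \<ge> 0" if "t \<in> {-1..0}" for t
      using ab_iff[OF that] fge[OF that] unfolding cube_def by simp
    have c: "cube t = 0" if t: "t \<in> {-1..0}" for t
      by (rule has_integral_0_cbox_imp_0[of "-1" 0 cube])
         (use cube_cont cge cube_int0[OF S] t in \<open>auto simp: box_real\<close>)
    show ?thesis
    proof (intro ballI)
      fix t :: real assume t: "t \<in> {-1..0}"
      show "a t = b t" using c[OF t] a_pos[OF t] b_pos[OF t] by (simp add: cube_def)
    qed
  next
    case False
    with ord have Kle: "\<forall>t\<in>{-1..0}. K t \<le> H t" by blast
    have wle: "w t \<le> 0" if "t \<in> {-1..0}" for t using Kle that by (simp add: w_def)
    have fle: "f t \<le> 0" if t: "t \<in> {-1..0}" for t
    proof -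
      have "integral {t..0} g \<ge> 0"
      proof (rule integral_nonneg)
        show "g integrable_on {t..0}" by (rule gint[OF t])
        fix s assume "s \<in> {t..0}"
        then have s: "s \<in> {-1..0}" using t by auto
        have "r s * w s \<ge> 0" using r_le[OF s] wle[OF s] by (simp add: mult_nonpos_nonpos)
        then show "0 \<le> g s" using F2 unfolding g_def by (simp add: mult.assoc)
      qed
      moreover have "f 0 \<le> 0"
      proof -
        have "\<rho> 0 * w 0 \<le> 0" using rho_pos[of 0] wle[of 0] by (simp add: mult_nonneg_nonpos)
        then show ?thesis unfolding f0 using Fpos by (simp add: divide_nonpos_pos)
      qed
      ultimately show ?thesis using f_eq[OF t] by linarith
    qed
    have cle: "- cube t \<ge> 0" if "t \<in> {-1..0}" for t
    proof -
      have le: "a t \<le> b t" using ab_iff2[OF that] fle[OF that] by simp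
      have "(a t - b t)^3 = - ((b t - a t)^3)" by (simp add: power3_eq_cube algebra_simps)
      moreover have "(b t - a t)^3 \<ge> 0" using le by simp
      ultimately show ?thesis unfolding cube_def by (simp add: divide_nonpos_nonneg)
    qed
    have c: "- cube t = 0" if t: "t \<in> {-1..0}" for t
      by (rule has_integral_0_cbox_imp_0[of "-1" 0 "\<lambda>t. - cube t"])
         (use cube_cont cle has_integral_neg[OF cube_int0[OF S]] t in \<open>auto simp: box_real intro: continuous_intros\<close>)
    show ?thesis
    proof (intro ballI)
      fix t :: real assume t: "t \<in> {-1..0}"
      show "a t = b t" using c[OF t] a_pos[OF t] b_pos[OF t] by (simp add: cube_def)
    qed
  qed
  show ?thesis
  proof
    fix t :: real assume t: "t \<in> {-1..0}"
    have "\<bar>w t - w (-1)\<bar> \<le> 0 * \<bar>t - (-1)\<bar>"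
      by (rule real_deriv_bound[OF wd]) (use ab t in auto)
    then show "K t = H t" by (simp add: w_def K_bot H_bot)
  qed
qed

end


lemma (in strip_pde) conclude:
  assumes rd: "\<And>t. t \<in> {-1..0} \<Longrightarrow> (\<rho> has_real_derivative r t) (at t within {-1..0})"
    and rho_pos: "\<And>t. t \<in> {-1..0} \<Longrightarrow> \<rho> t > 0"
    and r_le: "\<And>t. t \<in> {-1..0} \<Longrightarrow> r t \<le> 0"
    and H_bot: "H (-1) = 0" and H_top: "H 0 = 1"
    and Hd: "\<And>t. t \<in> {-1..0} \<Longrightarrow> (H has_real_derivative b t) (at t within {-1..0})"
    and S: "flow_force \<rho> H F K = flow_force \<rho> H F H"
    and ord: "(\<forall>t\<in>{-1..0}. K t \<ge> H t) \<or> (\<forall>t\<in>{-1..0}. K t \<le> H t)"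
  shows "\<forall>t\<in>{-1..0}. K t = H t"
proof -
  interpret O: ode_loc K a H b \<rho> r F
  proof
    show "F > 0" by (rule Fpos)
    show "\<And>t. t \<in> {-1..0} \<Longrightarrow> (K has_real_derivative a t) (at t within {-1..0})" by (rule K_deriv)
    show "continuous_on {-1..0} a" by (rule a_cont)
    show "\<And>t. t \<in> {-1..0} \<Longrightarrow> a t > 0" by (rule a_pos)
    show "\<And>t. t \<in> {-1..0} \<Longrightarrow> (H has_real_derivative b t) (at t within {-1..0})" by (rule Hd)
    show "continuous_on {-1..0} b" by (rule b_cont)
    show "\<And>t. t \<in> {-1..0} \<Longrightarrow> b t > 0" by (rule bpos)
    show "\<And>t. t \<in> {-1..0} \<Longrightarrow> (\<rho> has_real_derivative r t) (at t within {-1..0})" by (rule rd)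
    show "continuous_on {-1..0} r" by (rule r_cont)
    show "\<And>t. t \<in> {-1..0} \<Longrightarrow> \<rho> t > 0" by (rule rho_pos)
    show "\<And>t. t \<in> {-1..0} \<Longrightarrow> r t \<le> 0" by (rule r_le)
    show "H (-1) = 0" by (rule H_bot)
    show "H 0 = 1" by (rule H_top)
    show "K (-1) = 0" by (rule bot_bc)
    show "\<And>p. p \<in> {-1..0} \<Longrightarrow> integral {p..0} (\<lambda>t. (1 / F\<^sup>2) * r t * (K t - H t)) =
        (-1 / (2 * (a 0)\<^sup>2) + 1 / (2 * (b 0)\<^sup>2)) - (-1 / (2 * (a p)\<^sup>2) + 1 / (2 * (b p)\<^sup>2))"
      using ode1 unfolding gK_def[abs_def] fA_def by blast
    show "1 / (2 * (a 0)\<^sup>2) - 1 / (2 * (b 0)\<^sup>2) + (1 / F\<^sup>2) * \<rho> 0 * (K 0 - 1) = 0" by (rule top_bc)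
  qed
  have dIK: "dI K t = a t" if "t \<in> {-1..0}" for t
    unfolding dI_def using K_deriv[OF that] that
    by (intro vector_derivative_within_closed_interval) (auto simp: has_real_derivative_iff_has_vector_derivative)
  have intG: "integral {p..0} (\<lambda>s. \<rho> s * dI H s) = integral {p..0} (\<lambda>s. \<rho> s * b s)"
    if "p \<in> {-1..0}" for p
  proof (rule integral_cong)
    fix s assume "s \<in> {p..0}"
    then have "s \<in> {-1..0}" using that by auto
    then show "\<rho> s * dI H s = \<rho> s * b s" by (simp add: dIH)
  qed
  have SK: "flow_force \<rho> H F K = integral {-1..0} O.IK"
    unfolding flow_force_def
  proof (rule integral_cong)
    fix p :: real assume p: "p \<in> {-1..0}"
    show "(1 / (2 * (dI K p)\<^sup>2) + 1 / (2 * (dI H p)\<^sup>2) - (1 / F\<^sup>2) * \<rho> p * (K p - H p)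
       - (1 / F\<^sup>2) * (- integral {p..0} (\<lambda>s. \<rho> s * dI H s))) * dI K p = O.IK p"
      unfolding O.IK_def O.G_def intG[OF p] dIK[OF p] dIH[OF p] by simp
  qed
  have SH: "flow_force \<rho> H F H = integral {-1..0} O.IH"
    unfolding flow_force_def
  proof (rule integral_cong)
    fix p :: real assume p: "p \<in> {-1..0}"
    show "(1 / (2 * (dI H p)\<^sup>2) + 1 / (2 * (dI H p)\<^sup>2) - (1 / F\<^sup>2) * \<rho> p * (H p - H p)
       - (1 / F\<^sup>2) * (- integral {p..0} (\<lambda>s. \<rho> s * dI H s))) * dI H p = O.IH p"
      unfolding O.IH_def O.G_def intG[OF p] dIH[OF p] by simp
  qed
  show ?thesis by (rule O.ode_main[OF _ ord]) (use S SK SH in simp)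
qed

theorem corollary4p11:
  fixes \<alpha> F :: real and \<rho> H Hplus Hminus :: "real \<Rightarrow> real"
    and h :: "real \<times> real \<Rightarrow> real"
  assumes alpha: "0 < \<alpha>" "\<alpha> < 1"
    and rho_reg: "C_k_alpha 2 \<alpha> \<rho>"
    and rho_pos: "\<forall>p\<in>{-1..0}. \<rho> p > 0"
    and rho_dec: "\<forall>p\<in>{-1..0}. dI \<rho> p \<le> 0"
    and H_reg: "C_k_alpha 3 \<alpha> H"
    and H_bot: "H (-1) = 0" and H_top: "H 0 = 1"
    and H_inc: "\<forall>p\<in>{-1..0}. dI H p > 0"
    and F_pos: "F > 0"
    and h_reg: "C2_bounded_strip h"
    and h_eq: "height_eq \<rho> H F h"
    and h_inf: "\<exists>\<delta>>0. \<forall>z\<in>Ropen. pp h z \<ge> \<delta>"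
    and lim_plus: "\<forall>p\<in>{-1..0}. ((\<lambda>q. h (q, p)) \<longlongrightarrow> Hplus p) at_top"
    and lim_minus: "\<forall>p\<in>{-1..0}. ((\<lambda>q. h (q, p)) \<longlongrightarrow> Hminus p) at_bot"
    and S_plus: "flow_force \<rho> H F Hplus = flow_force \<rho> H F H"
    and S_minus: "flow_force \<rho> H F Hminus = flow_force \<rho> H F H"
  shows "((\<forall>p\<in>{-1..0}. Hplus p \<ge> H p) \<or> (\<forall>p\<in>{-1..0}. Hplus p \<le> H p)
            \<longrightarrow> (\<forall>p\<in>{-1..0}. Hplus p = H p))
       \<and> ((\<forall>p\<in>{-1..0}. Hminus p \<ge> H p) \<or> (\<forall>p\<in>{-1..0}. Hminus p \<le> H p)
            \<longrightarrow> (\<forall>p\<in>{-1..0}. Hminus p = H p))"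
proof -
  obtain Dr where Dr0: "\<forall>x\<in>{-1..0}. Dr 0 x = \<rho> x"
    and Drd: "\<forall>j<2. \<forall>x\<in>{-1..0}. (Dr j has_real_derivative Dr (Suc j) x) (at x within {-1..0})"
    using rho_reg unfolding C_k_alpha_def by blast
  obtain DH where DH0: "\<forall>x\<in>{-1..0}. DH 0 x = H x"
    and DHd: "\<forall>j<3. \<forall>x\<in>{-1..0}. (DH j has_real_derivative DH (Suc j) x) (at x within {-1..0})"
    using H_reg unfolding C_k_alpha_def by blast
  have rd: "(\<rho> has_real_derivative Dr 1 x) (at x within {-1..0})" if x: "x \<in> {-1..0}" for x
  proof (rule has_field_derivative_transform_within[OF _ zero_less_one x])
    show "(Dr 0 has_real_derivative Dr 1 x) (at x within {-1..0})" using Drd x by simp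
    show "\<And>y. y \<in> {-1..0} \<Longrightarrow> dist y x < 1 \<Longrightarrow> Dr 0 y = \<rho> y" using Dr0 by blast
  qed
  have Hd: "(H has_real_derivative DH 1 x) (at x within {-1..0})" if x: "x \<in> {-1..0}" for x
  proof (rule has_field_derivative_transform_within[OF _ zero_less_one x])
    show "(DH 0 has_real_derivative DH 1 x) (at x within {-1..0})" using DHd x by simp
    show "\<And>y. y \<in> {-1..0} \<Longrightarrow> dist y x < 1 \<Longrightarrow> DH 0 y = H y" using DH0 by blast
  qed
  have dIr: "dI \<rho> x = Dr 1 x" if x: "x \<in> {-1..0}" for x
    unfolding dI_def using rd[OF x] x
    by (intro vector_derivative_within_closed_interval) (auto simp: has_real_derivative_iff_has_vector_derivative)
  have dIH: "dI H x = DH 1 x" if x: "x \<in> {-1..0}" for x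
    unfolding dI_def using Hd[OF x] x
    by (intro vector_derivative_within_closed_interval) (auto simp: has_real_derivative_iff_has_vector_derivative)
  have r_cont: "continuous_on {-1..0} (Dr 1)"
  proof -
    have "\<forall>x\<in>{-1..0}. (Dr 1 has_real_derivative Dr 2 x) (at x within {-1..0})"
      using Drd by (simp add: numeral_2_eq_2)
    then show ?thesis by (meson DERIV_continuous continuous_on_eq_continuous_within)
  qed
  have b_deriv: "(DH 1 has_real_derivative DH 2 x) (at x within {-1..0})" if "x \<in> {-1..0}" for x
    using DHd that by (simp add: numeral_2_eq_2)
  have H_cont: "continuous_on {-1..0} H"
    using Hd by (meson DERIV_continuous continuous_on_eq_continuous_within)
  obtain Dh D2h where hd: "\<forall>z\<in>Rbar. (h has_derivative blinfun_apply (Dh z)) (at z within Rbar) \<and>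
                 (Dh has_derivative blinfun_apply (D2h z)) (at z within Rbar)"
    and c2: "continuous_on Rbar D2h"
    and bd1: "bounded (h ` Rbar)" and bd2: "bounded (Dh ` Rbar)" and bd3: "bounded (D2h ` Rbar)"
    using h_reg unfolding C2_bounded_strip_def by blast
  obtain B1 where B1: "\<forall>x\<in>h ` Rbar. norm x \<le> B1" using bd1 bounded_iff by blast
  obtain B2 where B2: "\<forall>x\<in>Dh ` Rbar. norm x \<le> B2" using bd2 bounded_iff by blast
  obtain B3 where B3: "\<forall>x\<in>D2h ` Rbar. norm x \<le> B3" using bd3 bounded_iff by blast
  define C where "C = max B1 (max B2 B3)"
  obtain \<delta> where dpos: "\<delta> > 0" and dge: "\<forall>z\<in>Ropen. pp h z \<ge> \<delta>" using h_inf by blast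
  have gen: "\<forall>p\<in>{-1..0}. K p = H p"
    if nb: "Fl \<noteq> bot" and sh: "\<And>\<tau>. filterlim (\<lambda>q. q + \<tau>) Fl Fl"
      and sq: "\<And>T. T > 0 \<Longrightarrow> \<exists>s::nat \<Rightarrow> real. \<forall>\<xi>. (\<forall>n. s n \<le> \<xi> n \<and> \<xi> n \<le> s n + T) \<longrightarrow> filterlim \<xi> Fl sequentially"
      and lK: "\<And>p. p \<in> {-1..0} \<Longrightarrow> ((\<lambda>q. h (q,p)) \<longlongrightarrow> K p) Fl"
      and SK: "flow_force \<rho> H F K = flow_force \<rho> H F H"
      and ord: "(\<forall>t\<in>{-1..0}. K t \<ge> H t) \<or> (\<forall>t\<in>{-1..0}. K t \<le> H t)"
    for Fl K
  proof -
    interpret P: strip_pde h Dh D2h C \<delta> Fl K \<rho> H F "DH 1" "DH 2" "Dr 1"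
    proof
      show "\<And>z. z \<in> Rbar \<Longrightarrow> (h has_derivative blinfun_apply (Dh z)) (at z within Rbar)" using hd by blast
      show "\<And>z. z \<in> Rbar \<Longrightarrow> (Dh has_derivative blinfun_apply (D2h z)) (at z within Rbar)" using hd by blast
      show "continuous_on Rbar D2h" by (rule c2)
      show "\<And>z. z \<in> Rbar \<Longrightarrow> \<bar>h z\<bar> \<le> C" using B1 by (force simp: C_def)
      show "\<And>z. z \<in> Rbar \<Longrightarrow> norm (Dh z) \<le> C" using B2 by (force simp: C_def)
      show "\<And>z. z \<in> Rbar \<Longrightarrow> norm (D2h z) \<le> C" using B3 by (force simp: C_def)
      show "\<delta> > 0" by (rule dpos)
      show "\<And>z. z \<in> Ropen \<Longrightarrow> pp h z \<ge> \<delta>" using dge by blast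
      show "Fl \<noteq> bot" by (rule nb)
      show "\<And>\<tau>. filterlim (\<lambda>q. q + \<tau>) Fl Fl" by (rule sh)
      show "\<And>p. p \<in> {-1..0} \<Longrightarrow> ((\<lambda>q. h (q,p)) \<longlongrightarrow> K p) Fl" by (rule lK)
      show "\<And>T. T > 0 \<Longrightarrow> \<exists>s::nat \<Rightarrow> real. \<forall>\<xi>. (\<forall>n. s n \<le> \<xi> n \<and> \<xi> n \<le> s n + T) \<longrightarrow> filterlim \<xi> Fl sequentially"
        by (rule sq)
      show "F > 0" by (rule F_pos)
      show "\<And>t. t \<in> {-1..0} \<Longrightarrow> (DH 1 has_real_derivative DH 2 t) (at t within {-1..0})" by (rule b_deriv)
      show "\<And>t. t \<in> {-1..0} \<Longrightarrow> dI H t = DH 1 t" by (rule dIH)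
      show "\<And>t. t \<in> {-1..0} \<Longrightarrow> DH 1 t > 0" using H_inc dIH by force
      show "continuous_on {-1..0} (Dr 1)" by (rule r_cont)
      show "\<And>t. t \<in> {-1..0} \<Longrightarrow> dI \<rho> t = Dr 1 t" by (rule dIr)
      show "continuous_on {-1..0} H" by (rule H_cont)
      show "height_eq \<rho> H F h" by (rule h_eq)
    qed
    show ?thesis
    proof (rule P.conclude[OF rd _ _ H_bot H_top Hd SK ord])
      show "\<And>t. t \<in> {-1..0} \<Longrightarrow> \<rho> t > 0" using rho_pos by blast
      show "\<And>t. t \<in> {-1..0} \<Longrightarrow> Dr 1 t \<le> 0" using rho_dec dIr by force
    qed
  qed
  have shift_top: "filterlim (\<lambda>q. q + \<tau>) at_top at_top" for \<tau> :: real
    using filterlim_tendsto_add_at_top[OF tendsto_const[of \<tau>] filterlim_ident] by (simp add: add.commute)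
  have shift_bot: "filterlim (\<lambda>q. q + \<tau>) at_bot at_bot" for \<tau> :: real
    using filterlim_tendsto_add_at_bot_iff[OF tendsto_const[of \<tau>], of "\<lambda>x. x" at_bot] filterlim_ident
    by (simp add: add.commute)
  have seq_top: "\<exists>s::nat \<Rightarrow> real. \<forall>\<xi>. (\<forall>n. s n \<le> \<xi> n \<and> \<xi> n \<le> s n + T) \<longrightarrow> filterlim \<xi> at_top sequentially" for T :: real
  proof (intro exI allI impI)
    fix \<xi> :: "nat \<Rightarrow> real" assume a: "\<forall>n. real n \<le> \<xi> n \<and> \<xi> n \<le> real n + T"
    show "filterlim \<xi> at_top sequentially"
      by (rule filterlim_at_top_mono[OF filterlim_real_sequentially]) (use a in auto)
  qed
  have seq_bot: "\<exists>s::nat \<Rightarrow> real. \<forall>\<xi>. (\<forall>n. s n \<le> \<xi> n \<and> \<xi> n \<le> s n + T) \<longrightarrow> filterlim \<xi> at_bot sequentially" for T :: real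
  proof (intro exI allI impI)
    fix \<xi> :: "nat \<Rightarrow> real" assume a: "\<forall>n. - real n - T \<le> \<xi> n \<and> \<xi> n \<le> - real n - T + T"
    have "filterlim (\<lambda>n. - \<xi> n) at_top sequentially"
    proof (rule filterlim_at_top_mono[OF filterlim_real_sequentially])
      show "\<forall>\<^sub>F n in sequentially. real n \<le> - \<xi> n"
      proof (rule always_eventually, rule allI)
        fix n from a have "\<xi> n \<le> - real n" by simp
        then show "real n \<le> - \<xi> n" by linarith
      qed
    qed
    then show "filterlim \<xi> at_bot sequentially" by (simp add: filterlim_uminus_at_bot)
  qed
  show ?thesis
  proof (intro conjI impI)
    assume ord: "(\<forall>p\<in>{-1..0}. Hplus p \<ge> H p) \<or> (\<forall>p\<in>{-1..0}. Hplus p \<le> H p)"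
    show "\<forall>p\<in>{-1..0}. Hplus p = H p"
      by (rule gen[OF _ shift_top seq_top _ S_plus ord]) (use lim_plus in auto)
  next
    assume ord: "(\<forall>p\<in>{-1..0}. Hminus p \<ge> H p) \<or> (\<forall>p\<in>{-1..0}. Hminus p \<le> H p)"
    show "\<forall>p\<in>{-1..0}. Hminus p = H p"
      by (rule gen[OF _ shift_bot seq_bot _ S_minus ord]) (use lim_minus in auto)
  qed
qed

end
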